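(* Let $\xi\in(0,1)$ be a constant. For unit-sum valuation functions in one-sided matching with $n$ agents and $n$ items, every deterministic matching algorithm that makes at most $k$ value queries per agent, where $1\le k\le(1-\xi)n^{1/(k+1)}$, has distortion $\Omega\!\left(\frac1k n^{1/(k+1)}\right)$. The hidden constant depends only on $\xi$. This holds even on instances where all agents have the same ranking of the items.
   Context: One-sided matching: there is a set $N$ of $n$ agents and a set $A$ of $n$ items. Each agent $i$ has a valuation function $v_i:A\to\mathbb{R}_{\ge0}$ with $\sum_{j\in A}v_i(j)=1$ (unit-sum). A deterministic matching algorithm making $k$ queries per agent receives the strict rankings consistent with the values (if $a\succ_i b$ then $v_i(a)\ge v_i(b)$). It adaptively makes value queries $(i,j)\mapsto v_i(j)$, at most $k$ per agent, and outputs a bijection $Y:N\to A$. Its distortion is the supremum over unit-sum valuation profiles of $\max_Z\sum_i v_i(z_i)/\sum_i v_i(y_i)$. *)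

theory Defs
  imports Complex_Main
begin

text \<open>Agents and items are both indexed by {..<n}. A valuation profile is
  v :: nat => nat => real, with v i j the value of agent i for item j.
  A ranking profile is P :: nat => nat => nat, where P i r is the item that
  agent i ranks at position r (position 0 = most preferred).\<close>

text \<open>A deterministic adaptive query algorithm, after seeing the rankings,
  is a (possibly infinitely branching, well-founded) decision tree: either it
  outputs a matching, or it queries the value v i j and continues depending
  on the answer.\<close>

datatype qtree = Output "nat \<Rightarrow> nat" | Query nat nat "real \<Rightarrow> qtree"

primrec run_out :: "qtree \<Rightarrow> (nat \<Rightarrow> nat \<Rightarrow> real) \<Rightarrow> nat \<Rightarrow> nat" where
  "run_out (Output Y) v = Y"
| "run_out (Query i j f) v = run_out (f (v i j)) v"

primrec run_queries :: "qtree \<Rightarrow> (nat \<Rightarrow> nat \<Rightarrow> real) \<Rightarrow> (nat \<times> nat) list" where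
  "run_queries (Output Y) v = []"
| "run_queries (Query i j f) v = (i, j) # run_queries (f (v i j)) v"

definition is_ranking :: "nat \<Rightarrow> (nat \<Rightarrow> nat) \<Rightarrow> bool" where
  "is_ranking n \<sigma> \<longleftrightarrow> bij_betw \<sigma> {..<n} {..<n}"

definition unit_sum :: "nat \<Rightarrow> (nat \<Rightarrow> nat \<Rightarrow> real) \<Rightarrow> bool" where
  "unit_sum n v \<longleftrightarrow> (\<forall>i<n. (\<forall>j<n. v i j \<ge> 0) \<and> (\<Sum>j<n. v i j) = 1)"

definition consistent :: "nat \<Rightarrow> (nat \<Rightarrow> nat \<Rightarrow> nat) \<Rightarrow> (nat \<Rightarrow> nat \<Rightarrow> real) \<Rightarrow> bool" where
  "consistent n P v \<longleftrightarrow> (\<forall>i<n. \<forall>r s. r < s \<and> s < n \<longrightarrow> v i (P i r) \<ge> v i (P i s))"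

definition valid_alg :: "nat \<Rightarrow> nat \<Rightarrow> ((nat \<Rightarrow> nat \<Rightarrow> nat) \<Rightarrow> qtree) \<Rightarrow> bool" where
  "valid_alg n k A \<longleftrightarrow>
    (\<forall>P v. (\<forall>i<n. is_ranking n (P i)) \<and> unit_sum n v \<and> consistent n P v \<longrightarrow>
       (\<forall>(i, j) \<in> set (run_queries (A P) v). i < n \<and> j < n) \<and>
       (\<forall>i<n. length (filter (\<lambda>q. fst q = i) (run_queries (A P) v)) \<le> k) \<and>
       bij_betw (run_out (A P) v) {..<n} {..<n})"

definition welfare :: "nat \<Rightarrow> (nat \<Rightarrow> nat \<Rightarrow> real) \<Rightarrow> (nat \<Rightarrow> nat) \<Rightarrow> real" where
  "welfare n v Y = (\<Sum>i<n. v i (Y i))"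

end

theory Submission imports Defs begin
locale adv =
  fixes m k n :: nat
  assumes m2: "2 \<le> m" and mk: "k + 1 \<le> m" and mn: "m^(k+1) \<le> n"
begin

definition bkt :: "nat \<Rightarrow> nat" where "bkt j = min (k+1) (LEAST t. j < m^t)"
definition fval :: "nat \<Rightarrow> real" where "fval t = (if t \<le> k then 1 / real m ^ (t+1) else 0)"
definition fv :: "nat \<Rightarrow> real" where "fv j = fval (bkt j)"
definition B :: "nat \<Rightarrow> nat set" where "B t = {j. j < n \<and> bkt j = t}"
definition R :: "nat \<Rightarrow> real" where "R t = sum fv {j. j < n \<and> bkt j \<noteq> t}"
definition u :: "nat \<Rightarrow> real" where "u t = (1 - R t) / real (card (B t))"
definition gv :: "nat \<Rightarrow> nat \<Rightarrow> real" where "gv t j = (if j < n \<and> bkt j = t then u t else fv j)"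
definition F :: real where "F = sum fv {..<n}"

lemma ex_pow: "j < m^j"
proof -
  have "j < 2^j" by (rule less_exp)
  also have "(2::nat)^j \<le> m^j" using m2 by (rule power_mono) simp
  finally show ?thesis .
qed

lemma least_bound: "j < m^(LEAST t. j < m^t)"
  by (rule LeastI[of _ j]) (rule ex_pow)

lemma bkt_le: "bkt j \<le> k+1" by (simp add: bkt_def)

lemma bkt_mono: assumes "j1 \<le> j2" shows "bkt j1 \<le> bkt j2"
proof -
  have "(LEAST t. j1 < m^t) \<le> (LEAST t. j2 < m^t)"
    by (rule Least_le) (use assms least_bound[of j2] in linarith)
  thus ?thesis by (simp add: bkt_def)
qed

lemma bkt_lt: assumes "bkt j = t" "t \<le> k" shows "j < m^t"
proof -
  have "(LEAST t. j < m^t) = t" using assms by (auto simp: bkt_def min_def split: if_splits)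
  thus ?thesis using least_bound[of j] by simp
qed

lemma bkt_eq: assumes "1 \<le> t" "t \<le> k+1" "m^(t-1) \<le> j" "j < m^t" shows "bkt j = t"
proof -
  have "(LEAST s. j < m^s) = t"
  proof (rule Least_equality)
    show "j < m^t" by fact
    fix s assume s: "j < m^s"
    show "t \<le> s"
    proof (rule ccontr)
      assume "\<not> t \<le> s"
      hence "s \<le> t - 1" by simp
      hence "m^s \<le> m^(t-1)" using m2 by (intro power_increasing) auto
      thus False using s assms(3) by simp
    qed
  qed
  thus ?thesis using assms(2) by (simp add: bkt_def)
qed

lemma bkt0: "bkt 0 = 0"
  by (simp add: bkt_def)

lemma mpos: "(0::real) < m" using m2 by simp

lemma fval_nonneg: "0 \<le> fval t" using mpos by (simp add: fval_def)

lemma fval_anti: assumes "s \<le> t" shows "fval t \<le> fval s"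
proof (cases "t \<le> k")
  case True
  have "real m ^ (s+1) \<le> real m ^ (t+1)" using m2 assms by (intro power_increasing) auto
  moreover have "0 < real m ^ (s+1)" using mpos by simp
  ultimately have "1 / real m ^ (t+1) \<le> 1 / real m ^ (s+1)"
    by (intro divide_left_mono) auto
  thus ?thesis using True assms by (simp add: fval_def)
next
  case False thus ?thesis using fval_nonneg[of s] by (simp add: fval_def)
qed

lemma fv_nonneg: "0 \<le> fv j" by (simp add: fv_def fval_nonneg)

lemma fv_anti: "j1 \<le> j2 \<Longrightarrow> fv j2 \<le> fv j1"
  unfolding fv_def by (intro fval_anti bkt_mono)

lemma npos: "0 < n"
proof -
  have "0 < m^(k+1)" using m2 by simp
  thus ?thesis using mn by linarith
qed

lemma finB: "finite (B t)" by (simp add: B_def)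

lemma card_B_le: assumes "t \<le> k" shows "card (B t) \<le> m^t"
proof -
  have "B t \<subseteq> {..<m^t}" using bkt_lt assms by (auto simp: B_def)
  thus ?thesis by (metis card_lessThan card_mono finite_lessThan)
qed

lemma card_B_ge: assumes "1 \<le> t" "t \<le> k+1" shows "real m^t - real m^(t-1) \<le> card (B t)"
proof -
  have mt: "m^t \<le> n" using mn m2 assms by (meson le_trans one_le_numeral order_trans power_increasing)
  have "{m^(t-1)..<m^t} \<subseteq> B t" using bkt_eq assms mt by (auto simp: B_def)
  hence "card {m^(t-1)..<m^t} \<le> card (B t)" using finB by (rule card_mono[rotated])
  moreover have "m^(t-1) \<le> m^t" using m2 by (intro power_increasing) auto
  ultimately have "m^t - m^(t-1) \<le> card (B t)" by simp
  hence "real (m^t - m^(t-1)) \<le> card (B t)" by linarith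
  thus ?thesis using \<open>m^(t-1) \<le> m^t\<close> by (simp only: of_nat_diff of_nat_power)
qed

lemma B_pos: assumes "t \<le> k+1" shows "0 < card (B t)"
proof (cases "t = 0")
  case True
  hence "0 \<in> B t" using npos bkt0 by (simp add: B_def)
  thus ?thesis using finB card_gt_0_iff by blast
next
  case False
  have "real m^(t-1) < real m^t" using m2 False by (intro power_strict_increasing) auto
  thus ?thesis using card_B_ge[of t] False assms by linarith
qed

lemma sumB: "sum fv (B t) = card (B t) * fval t"
  by (simp add: fv_def B_def)

lemma R_plus: "R t + sum fv (B t) = F"
proof -
  have "{..<n} = {j. j < n \<and> bkt j \<noteq> t} \<union> B t" by (auto simp: B_def)
  moreover have "{j. j < n \<and> bkt j \<noteq> t} \<inter> B t = {}" by (auto simp: B_def)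
  ultimately show ?thesis unfolding F_def R_def
    by (simp add: sum.union_disjoint finB)
qed

lemma sumB_nonneg: "0 \<le> sum fv (B t)" by (intro sum_nonneg fv_nonneg)

lemma R_nonneg: "0 \<le> R t" unfolding R_def by (intro sum_nonneg fv_nonneg)

lemma F_le: "F \<le> real (k+1) / m"
proof -
  have "F = (\<Sum>t\<in>{..k+1}. sum fv {j \<in> {..<n}. bkt j = t})"
    unfolding F_def by (rule sum.group[symmetric]) (use bkt_le in auto)
  also have "\<dots> = (\<Sum>t\<in>{..k+1}. sum fv (B t))" by (simp add: B_def)
  also have "\<dots> = (\<Sum>t\<le>k. sum fv (B t)) + sum fv (B (k+1))" by simp
  also have "sum fv (B (k+1)) = 0" by (simp add: sumB fval_def)
  also have "(\<Sum>t\<le>k. sum fv (B t)) \<le> (\<Sum>t\<le>k. 1 / real m)"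
  proof (rule sum_mono)
    fix t assume "t \<in> {..k}"
    hence t: "t \<le> k" by simp
    have "sum fv (B t) = card (B t) / real m ^ (t+1)" using t by (simp add: sumB fval_def)
    also have "\<dots> \<le> real m ^ t / real m ^ (t+1)"
    proof (rule divide_right_mono)
      have "real (card (B t)) \<le> real (m ^ t)" using card_B_le[OF t] by (rule of_nat_mono)
      thus "real (card (B t)) \<le> real m ^ t" by simp
      show "0 \<le> real m ^ (t+1)" using mpos by simp
    qed
    also have "\<dots> = 1 / real m" using mpos by (simp add: field_simps)
    finally show "sum fv (B t) \<le> 1 / real m" .
  qed
  also have "(\<Sum>t\<le>k. 1 / real m) = real (k+1) / m" by simp
  finally show ?thesis by simp
qed

lemma F_le1: "F \<le> 1"
proof -
  have "real (k+1) / m \<le> 1" using mk mpos by (simp add: divide_le_eq_1)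
  thus ?thesis using F_le by linarith
qed

lemma R_le_F: "R t \<le> F" using R_plus[of t] sumB_nonneg[of t] by linarith

lemma R_ge: assumes "1 \<le> t" shows "1 / real m \<le> R t"
proof -
  have "0 \<in> {j. j < n \<and> bkt j \<noteq> t}" using npos bkt0 assms by simp
  hence "fv 0 \<le> R t" unfolding R_def
    by (intro member_le_sum fv_nonneg) auto
  moreover have "fv 0 = 1 / real m" by (simp add: fv_def bkt0 fval_def)
  ultimately show ?thesis by simp
qed

lemma u_ge: assumes "t \<le> k+1" shows "fval t \<le> u t"
proof -
  have c: "0 < real (card (B t))" using B_pos[OF assms] by simp
  have "card (B t) * fval t \<le> 1 - R t" using R_plus[of t] F_le1 sumB[of t] by linarith
  thus ?thesis unfolding u_def using c by (simp add: field_simps)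
qed

lemma u_nonneg: assumes "t \<le> k+1" shows "0 \<le> u t"
  using u_ge[OF assms] fval_nonneg[of t] by linarith

lemma u_le: assumes "1 \<le> t" "t \<le> k+1" shows "u t \<le> fval (t-1)"
proof -
  have c: "0 < real (card (B t))" using B_pos[OF assms(2)] by simp
  have mt: "real m ^ t = real m * real m^(t-1)" using assms(1)
    by (metis Suc_diff_le diff_Suc_1 power_Suc)
  have p: "0 < real m^(t-1)" using mpos by simp
  have "1 - R t \<le> 1 - 1 / real m" using R_ge[OF assms(1)] by simp
  also have "\<dots> = (real m^t - real m^(t-1)) / real m ^ t" using mpos p by (simp add: mt field_simps)
  also have "\<dots> \<le> card (B t) / real m ^ t"
    using card_B_ge[OF assms] mpos by (intro divide_right_mono) auto
  finally have "1 - R t \<le> card (B t) / real m ^ t" .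
  hence "u t \<le> 1 / real m ^ t" unfolding u_def using c mpos by (simp add: field_simps)
  moreover have "t - 1 \<le> k" using assms by simp
  ultimately show ?thesis using assms by (simp add: fval_def)
qed

lemma gv_nonneg: "t \<le> k+1 \<Longrightarrow> 0 \<le> gv t j"
  by (simp add: gv_def u_nonneg fv_nonneg)

lemma gv_sum: assumes "t \<le> k+1" shows "(\<Sum>j<n. gv t j) = 1"
proof -
  have "(\<Sum>j<n. gv t j) = sum (\<lambda>j. u t) ({..<n} \<inter> {j. j < n \<and> bkt j = t})
        + sum fv ({..<n} \<inter> - {j. j < n \<and> bkt j = t})"
    unfolding gv_def by (rule sum.If_cases) simp
  also have "{..<n} \<inter> {j. j < n \<and> bkt j = t} = B t" by (auto simp: B_def)
  also have "{..<n} \<inter> - {j. j < n \<and> bkt j = t} = {j. j < n \<and> bkt j \<noteq> t}" by auto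
  finally have "(\<Sum>j<n. gv t j) = card (B t) * u t + R t" by (simp add: R_def)
  also have "card (B t) * u t = 1 - R t" using B_pos[OF assms] by (simp add: u_def)
  finally show ?thesis by simp
qed

lemma gv_mono: assumes "t \<le> k+1" "j1 < j2" "j2 < n" shows "gv t j2 \<le> gv t j1"
proof -
  have b: "bkt j1 \<le> bkt j2" using assms by (intro bkt_mono) simp
  have a: "fv j2 \<le> fv j1" using assms by (intro fv_anti) simp
  consider "bkt j1 = t" "bkt j2 = t" | "bkt j1 \<noteq> t" "bkt j2 \<noteq> t"
    | "bkt j1 = t" "bkt j2 \<noteq> t" | "bkt j1 \<noteq> t" "bkt j2 = t" by blast
  thus ?thesis
  proof cases
    case 1 thus ?thesis using assms by (simp add: gv_def)
  next
    case 2 thus ?thesis using assms a by (simp add: gv_def)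
  next
    case 3
    have "fv j1 \<le> u t" using u_ge[OF assms(1)] 3 by (simp add: fv_def)
    thus ?thesis using 3 assms a by (simp add: gv_def)
  next
    case 4
    hence t1: "1 \<le> t" using b by auto
    have "bkt j1 \<le> t - 1" using 4 b by auto
    hence "fval (t-1) \<le> fv j1" unfolding fv_def by (rule fval_anti)
    thus ?thesis using u_le[OF t1 assms(1)] 4 assms by (simp add: gv_def)
  qed
qed

definition V :: "(nat \<Rightarrow> nat) \<Rightarrow> nat \<Rightarrow> nat \<Rightarrow> real" where
  "V T i j = (if i < n then gv (T i) j else fv j)"

lemma V_good: assumes "\<forall>i. T i \<le> k+1"
  shows "unit_sum n (V T)" "consistent n (\<lambda>_. id) (V T)"
  using assms gv_nonneg gv_sum gv_mono by (auto simp: unit_sum_def consistent_def V_def)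

end
definition cnt :: "nat \<Rightarrow> (nat \<times> nat) list \<Rightarrow> nat" where
  "cnt i xs = length (filter (\<lambda>q. fst q = i) xs)"

lemma cnt_take: "cnt i (take p xs) \<le> cnt i xs"
  unfolding cnt_def by (metis append_take_drop_id filter_append length_append le_add1)

lemma run_prefix:
  "(\<forall>q\<in>set (take p (run_queries T v)). w (fst q) (snd q) = v (fst q) (snd q))
   \<Longrightarrow> take p (run_queries T w) = take p (run_queries T v)"
proof (induction T arbitrary: p)
  case (Output Y) thus ?case by simp
next
  case (Query i j f)
  show ?case
  proof (cases p)
    case 0 thus ?thesis by simp
  next
    case (Suc p')
    have e: "w i j = v i j" using Query.prems Suc by simp
    have "\<forall>q\<in>set (take p' (run_queries (f (v i j)) v)). w (fst q) (snd q) = v (fst q) (snd q)"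
      using Query.prems Suc by simp
    hence "take p' (run_queries (f (v i j)) w) = take p' (run_queries (f (v i j)) v)"
      using Query.IH by blast
    thus ?thesis using Suc e by simp
  qed
qed

lemma run_same:
  "(\<forall>q\<in>set (run_queries T v). w (fst q) (snd q) = v (fst q) (snd q))
   \<Longrightarrow> run_out T w = run_out T v \<and> run_queries T w = run_queries T v"
proof (induction T)
  case (Output Y) thus ?case by simp
next
  case (Query i j f)
  have e: "w i j = v i j" using Query.prems by simp
  have "\<forall>q\<in>set (run_queries (f (v i j)) v). w (fst q) (snd q) = v (fst q) (snd q)"
    using Query.prems by simp
  hence "run_out (f (v i j)) w = run_out (f (v i j)) v \<and> run_queries (f (v i j)) w = run_queries (f (v i j)) v"
    using Query.IH by blast
  thus ?case using e by simp
qed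

context adv begin

lemma pigeon: assumes "finite S" "card S \<le> k+1" shows "\<exists>t\<le>k+1. \<forall>j\<in>S. bkt j \<noteq> t"
proof (rule ccontr)
  assume "\<not> ?thesis"
  hence "{..k+1} \<subseteq> bkt ` S" by auto
  hence "card {..k+1} \<le> card (bkt ` S)" using assms(1) by (intro card_mono) auto
  also have "\<dots> \<le> card S" using assms(1) by (rule card_image_le)
  finally show False using assms(2) by simp
qed

lemma V_nonneg: "\<forall>i. T i \<le> k+1 \<Longrightarrow> 0 \<le> V T i j"
  by (simp add: V_def gv_nonneg fv_nonneg)

lemma main:
  assumes valid: "valid_alg n k A"
  shows "\<exists>v Z. unit_sum n v \<and> consistent n (\<lambda>_. id) v \<and> bij_betw Z {..<n} {..<n} \<and>
           1 - F \<le> welfare n v Z \<and> welfare n v (run_out (A (\<lambda>_. id)) v) \<le> F"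
proof -
  define Tq where "Tq = A (\<lambda>_. id)"
  define f0 where "f0 = (\<lambda>(i::nat) j. fv j)"
  define Q where "Q = run_queries Tq f0"
  define Y where "Y = run_out Tq f0"
  define J where "J L i = {j. (i,j) \<in> set L \<and> j < n}" for L :: "(nat \<times> nat) list" and i
  have rk: "\<forall>i<n. is_ranking n ((\<lambda>_. id) i)" by (simp add: is_ranking_def)
  have val: "(\<forall>q\<in>set (run_queries Tq v). fst q < n \<and> snd q < n) \<and> (\<forall>i<n. cnt i (run_queries Tq v) \<le> k)
      \<and> bij_betw (run_out Tq v) {..<n} {..<n}"
    if "unit_sum n v" "consistent n (\<lambda>_. id) v" for v
  proof -
    have "(\<forall>(i, j) \<in> set (run_queries Tq v). i < n \<and> j < n) \<and>
       (\<forall>i<n. length (filter (\<lambda>q. fst q = i) (run_queries Tq v)) \<le> k) \<and>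
       bij_betw (run_out Tq v) {..<n} {..<n}"
      using valid[unfolded valid_alg_def, rule_format, of "\<lambda>_. id" v] rk that unfolding Tq_def by blast
    thus ?thesis unfolding cnt_def by auto
  qed
  have finJ: "finite (J L i)" for L i by (simp add: J_def)
  have cardJ: "card (J L i) \<le> cnt i L" for L i
  proof -
    have "J L i \<subseteq> snd ` set (filter (\<lambda>q. fst q = i) L)" by (force simp: J_def)
    hence "card (J L i) \<le> card (snd ` set (filter (\<lambda>q. fst q = i) L))" by (intro card_mono) auto
    also have "\<dots> \<le> card (set (filter (\<lambda>q. fst q = i) L))" by (rule card_image_le) simp
    also have "\<dots> \<le> cnt i L" unfolding cnt_def by (rule card_length)
    finally show ?thesis .
  qed
  have agree: "\<forall>q\<in>set L. V T (fst q) (snd q) = f0 (fst q) (snd q)"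
    if "\<forall>i. \<forall>j\<in>J L i. bkt j \<noteq> T i" for L T
  proof
    fix q assume q: "q \<in> set L"
    obtain i j where qij: "q = (i,j)" by (cases q)
    show "V T (fst q) (snd q) = f0 (fst q) (snd q)"
    proof (cases "i < n \<and> j < n")
      case True
      hence "j \<in> J L i" using q qij by (simp add: J_def)
      hence "bkt j \<noteq> T i" using that by blast
      thus ?thesis using qij by (simp add: V_def gv_def f0_def)
    next
      case False thus ?thesis using qij by (auto simp: V_def gv_def f0_def)
    qed
  qed
  have ind: "p \<le> length Q \<Longrightarrow> \<forall>i. cnt i (take p Q) \<le> k" for p
  proof (induction p)
    case 0 thus ?case by (simp add: cnt_def)
  next
    case (Suc p)
    have H: "\<forall>i. cnt i (take p Q) \<le> k" using Suc by simp
    define L where "L = take (Suc p) Q"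
    have pl: "p < length Q" using Suc.prems by simp
    have L1: "cnt i L \<le> k+1" for i
    proof -
      have "L = take p Q @ [Q!p]" unfolding L_def using pl by (rule take_Suc_conv_app_nth)
      hence "cnt i L \<le> cnt i (take p Q) + 1" by (simp add: cnt_def)
      thus ?thesis using H by (metis add_le_mono1 le_trans)
    qed
    have "\<forall>i. \<exists>t. t \<le> k+1 \<and> (\<forall>j\<in>J L i. bkt j \<noteq> t)"
    proof
      fix i
      have "card (J L i) \<le> k+1" using cardJ[of L i] L1[of i] by linarith
      thus "\<exists>t. t \<le> k+1 \<and> (\<forall>j\<in>J L i. bkt j \<noteq> t)" using pigeon[OF finJ] by blast
    qed
    then obtain T where T: "\<forall>i. T i \<le> k+1 \<and> (\<forall>j\<in>J L i. bkt j \<noteq> T i)" by metis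
    have Tb: "\<forall>i. T i \<le> k+1" using T by blast
    have ag: "\<forall>q\<in>set L. V T (fst q) (snd q) = f0 (fst q) (snd q)" using agree T by blast
    have eq: "take (Suc p) (run_queries Tq (V T)) = L"
      unfolding L_def Q_def by (rule run_prefix) (use ag in \<open>simp add: L_def Q_def\<close>)
    have vv: "(\<forall>q\<in>set (run_queries Tq (V T)). fst q < n \<and> snd q < n) \<and> (\<forall>i<n. cnt i (run_queries Tq (V T)) \<le> k)"
      using val[OF V_good[OF Tb]] by blast
    have sub: "set L \<subseteq> set (run_queries Tq (V T))" using eq by (metis set_take_subset)
    show ?case
    proof
      fix i
      show "cnt i (take (Suc p) Q) \<le> k"
      proof (cases "i < n")
        case True
        have "cnt i L \<le> cnt i (run_queries Tq (V T))" using eq cnt_take by metis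
        thus ?thesis using vv True L_def by fastforce
      next
        case False
        have "filter (\<lambda>q. fst q = i) L = []" using sub vv False by (force simp: filter_empty_conv)
        thus ?thesis by (simp add: cnt_def L_def)
      qed
    qed
  qed
  have QK: "\<forall>i. cnt i Q \<le> k" using ind[of "length Q"] by simp
  have "\<forall>i. \<exists>t. t \<le> k+1 \<and> (\<forall>j\<in>insert (Y i) (J Q i). bkt j \<noteq> t)"
  proof
    fix i
    have "card (insert (Y i) (J Q i)) \<le> card (J Q i) + 1" using finJ by (simp add: card_insert_if)
    also have "\<dots> \<le> k+1" using cardJ[of Q i] QK by (metis add_le_mono1 le_trans)
    finally show "\<exists>t. t \<le> k+1 \<and> (\<forall>j\<in>insert (Y i) (J Q i). bkt j \<noteq> t)"
      using pigeon[of "insert (Y i) (J Q i)"] finJ by blast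
  qed
  then obtain T where T: "\<forall>i. T i \<le> k+1 \<and> (\<forall>j\<in>insert (Y i) (J Q i). bkt j \<noteq> T i)" by metis
  have Tb: "\<forall>i. T i \<le> k+1" using T by blast
  define v where "v = V T"
  have us: "unit_sum n v" and co: "consistent n (\<lambda>_. id) v" using V_good[OF Tb] by (simp_all add: v_def)
  have ag: "\<forall>q\<in>set Q. v (fst q) (snd q) = f0 (fst q) (snd q)" using agree[of Q T] T unfolding v_def by blast
  have rs: "run_out Tq v = Y" unfolding Y_def using run_same[of Tq f0 v] ag by (simp add: Q_def)
  have bij: "bij_betw Y {..<n} {..<n}" using val[OF us co] rs by simp
  have alg: "welfare n v Y = F"
  proof -
    have "welfare n v Y = (\<Sum>i<n. fv (Y i))"
      unfolding welfare_def
    proof (rule sum.cong)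
      fix i assume i: "i \<in> {..<n}"
      have "Y i < n" using bij i by (meson bij_betwE lessThan_iff)
      moreover have "bkt (Y i) \<noteq> T i" using T by blast
      ultimately show "v i (Y i) = fv (Y i)" using i by (simp add: v_def V_def gv_def)
    qed simp
    also have "\<dots> = F" unfolding F_def by (rule sum.reindex_bij_betw[OF bij])
    finally show ?thesis .
  qed
  define As where "As t = {i. i < n \<and> T i = t}" for t
  have sA: "(\<Sum>t\<in>{..k+1}. card (As t)) = n"
  proof -
    have "(\<Sum>t\<in>{..k+1}. sum (\<lambda>_. 1::nat) {x \<in> {..<n}. T x = t}) = sum (\<lambda>_. 1) {..<n}"
      by (rule sum.group) (use Tb in auto)
    moreover have "{x \<in> {..<n}. T x = t} = As t" for t by (auto simp: As_def)
    ultimately show ?thesis by simp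
  qed
  have sB: "(\<Sum>t\<in>{..k+1}. card (B t)) = n"
  proof -
    have "(\<Sum>t\<in>{..k+1}. sum (\<lambda>_. 1::nat) {x \<in> {..<n}. bkt x = t}) = sum (\<lambda>_. 1) {..<n}"
      by (rule sum.group) (use bkt_le in auto)
    moreover have "{x \<in> {..<n}. bkt x = t} = B t" for t by (auto simp: B_def)
    ultimately show ?thesis by simp
  qed
  obtain t where t: "t \<le> k+1" "card (B t) \<le> card (As t)"
  proof (rule ccontr)
    assume "\<not> thesis"
    hence "\<forall>t\<in>{..k+1}. card (As t) < card (B t)" using that by force
    hence "(\<Sum>t\<in>{..k+1}. card (As t)) < (\<Sum>t\<in>{..k+1}. card (B t))"
      by (intro sum_strict_mono) auto
    thus False using sA sB by simp
  qed
  obtain A' where A': "A' \<subseteq> As t" "card A' = card (B t)" "finite A'"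
    using obtain_subset_with_card_n[OF t(2)] by metis
  obtain h where h: "bij_betw h A' (B t)" using finite_same_card_bij[OF A'(3) finB A'(2)] by blast
  have A'n: "A' \<subseteq> {..<n}" using A'(1) by (auto simp: As_def)
  have Bn: "B t \<subseteq> {..<n}" by (auto simp: B_def)
  have "card ({..<n} - A') = card ({..<n} - B t)"
    using A'n Bn A'(2) finB A'(3) by (simp add: card_Diff_subset)
  then obtain h' where h': "bij_betw h' ({..<n} - A') ({..<n} - B t)"
    using finite_same_card_bij by (metis finite_Diff finite_lessThan)
  define Z where "Z x = (if x \<in> A' then h x else h' x)" for x
  have "bij_betw Z (A' \<union> ({..<n} - A')) (B t \<union> ({..<n} - B t))"
    unfolding Z_def by (rule bij_betw_disjoint_Un[OF h h']) auto
  moreover have "A' \<union> ({..<n} - A') = {..<n}" "B t \<union> ({..<n} - B t) = {..<n}" using A'n Bn by auto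
  ultimately have bZ: "bij_betw Z {..<n} {..<n}" by simp
  have "sum (\<lambda>i. v i (Z i)) A' \<le> welfare n v Z"
    unfolding welfare_def using A'n by (intro sum_mono2) (auto simp: v_def V_nonneg[OF Tb])
  moreover have "sum (\<lambda>i. v i (Z i)) A' = sum (\<lambda>i. u t) A'"
  proof (rule sum.cong)
    fix i assume i: "i \<in> A'"
    have "Z i \<in> B t" using h i by (simp add: Z_def bij_betwE)
    moreover have "i < n" "T i = t" using A'(1) i by (auto simp: As_def)
    ultimately show "v i (Z i) = u t" by (simp add: v_def V_def gv_def B_def)
  qed simp
  moreover have "sum (\<lambda>i. u t) A' = 1 - R t" using A'(2) B_pos[OF t(1)] by (simp add: u_def)
  ultimately have "1 - F \<le> welfare n v Z" using R_le_F[of t] by linarith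
  thus ?thesis using us co bZ alg rs unfolding Tq_def by (intro exI[of _ v] exI[of _ Z]) simp
qed

end
theorem theorem6:
  fixes \<xi> :: real
  assumes "0 < \<xi>" and "\<xi> < 1"
  shows "\<exists>c > 0. \<forall>(n::nat) (k::nat) A.
           1 \<le> k \<and> real k \<le> (1 - \<xi>) * real n powr (1 / (real k + 1)) \<and> valid_alg n k A \<longrightarrow>
           (\<exists>\<sigma> v. is_ranking n \<sigma> \<and> (\<forall>r\<ge>n. \<sigma> r = r) \<and>
              unit_sum n v \<and> consistent n (\<lambda>_. \<sigma>) v \<and>
              (\<exists>Z. bij_betw Z {..<n} {..<n} \<and>
                 welfare n v Z \<ge> c * (real n powr (1 / (real k + 1)) / real k)
                                   * welfare n v (run_out (A (\<lambda>_. \<sigma>)) v)))"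
proof (rule exI[of _ "1/8"], intro conjI allI impI)
  show "(0::real) < 1/8" by simp
  fix n k :: nat and A
  assume H: "1 \<le> k \<and> real k \<le> (1 - \<xi>) * real n powr (1 / (real k + 1)) \<and> valid_alg n k A"
  hence k1: "1 \<le> k" and valid: "valid_alg n k A" by auto
  define x where "x = real n powr (1 / (real k + 1))"
  have x0: "0 \<le> x" by (simp add: x_def)
  have rk: "is_ranking n id" by (simp add: is_ranking_def)
  show "\<exists>\<sigma> v. is_ranking n \<sigma> \<and> (\<forall>r\<ge>n. \<sigma> r = r) \<and>
              unit_sum n v \<and> consistent n (\<lambda>_. \<sigma>) v \<and>
              (\<exists>Z. bij_betw Z {..<n} {..<n} \<and>
                 welfare n v Z \<ge> 1/8 * (real n powr (1 / (real k + 1)) / real k)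
                                   * welfare n v (run_out (A (\<lambda>_. \<sigma>)) v))"
  proof (cases "x \<le> 8 * real k")
    case True
    define v where "v = (\<lambda>(i::nat) (j::nat). 1 / real n)"
    have us: "unit_sum n v" by (simp add: unit_sum_def v_def)
    have co: "consistent n (\<lambda>_. id) v" by (simp add: consistent_def v_def)
    define Y where "Y = run_out (A (\<lambda>_. id)) v"
    have bij: "bij_betw Y {..<n} {..<n}"
      using valid[unfolded valid_alg_def, rule_format, of "\<lambda>_. id" v] rk us co by (simp add: Y_def)
    have W0: "0 \<le> welfare n v Y" unfolding welfare_def v_def by (intro sum_nonneg) simp
    have c1: "1/8 * (x / real k) \<le> 1" using True k1 by (simp add: field_simps)
    have c0: "0 \<le> 1/8 * (x / real k)" using x0 by simp
    have "1/8 * (x / real k) * welfare n v Y \<le> welfare n v Y"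
      using mult_left_le_one_le[OF W0 c0 c1] by simp
    hence "\<exists>Z. bij_betw Z {..<n} {..<n} \<and> 1/8 * (x / real k) * welfare n v Y \<le> welfare n v Z"
      using bij by blast
    thus ?thesis using rk us co unfolding x_def Y_def
      by (intro exI[of _ id] exI[of _ v]) auto
  next
    case False
    hence x8: "8 * real k < x" by simp
    define m where "m = nat \<lfloor>x\<rfloor>"
    have mx: "real m \<le> x" "x < real m + 1" using x0 by (simp_all add: m_def)
    have m8: "8 * k \<le> m"
    proof -
      have "real (8*k) \<le> x" using x8 by simp
      hence "int (8*k) \<le> \<lfloor>x\<rfloor>" by (metis floor_mono floor_of_nat)
      thus ?thesis by (simp add: m_def)
    qed
    have n0: "0 < n" using x8 k1 by (cases "n = 0") (auto simp: x_def)
    have xp: "x ^ (k+1) = real n"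
    proof -
      have "x ^ (k+1) = x powr real (k+1)" using x8 k1
        by (subst powr_realpow) auto
      also have "\<dots> = real n powr (1 / (real k + 1) * real (k+1))" unfolding x_def by (rule powr_powr)
      also have "1 / (real k + 1) * real (k+1) = 1" by simp
      finally show ?thesis using n0 by simp
    qed
    have mn: "m^(k+1) \<le> n"
    proof -
      have "real m ^ (k+1) \<le> x^(k+1)" using mx by (intro power_mono) auto
      hence "real (m^(k+1)) \<le> real n" using xp by simp
      thus ?thesis by linarith
    qed
    interpret adv m k n
      by unfold_locales (use m8 k1 mn in auto)
    obtain v Z where vZ: "unit_sum n v" "consistent n (\<lambda>_. id) v" "bij_betw Z {..<n} {..<n}"
      "1 - F \<le> welfare n v Z" "welfare n v (run_out (A (\<lambda>_. id)) v) \<le> F"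
      using main[OF valid] by blast
    define W where "W = welfare n v (run_out (A (\<lambda>_. id)) v)"
    have W0: "0 \<le> W"
    proof -
      have bij: "bij_betw (run_out (A (\<lambda>_. id)) v) {..<n} {..<n}"
        using valid[unfolded valid_alg_def, rule_format, of "\<lambda>_. id" v] rk vZ by simp
      show ?thesis unfolding W_def welfare_def
      proof (intro sum_nonneg)
        fix i assume "i \<in> {..<n}"
        moreover hence "run_out (A (\<lambda>_. id)) v i < n" using bij by (meson bij_betwE lessThan_iff)
        ultimately show "0 \<le> v i (run_out (A (\<lambda>_. id)) v i)" using vZ(1) by (simp add: unit_sum_def)
      qed
    qed
    have mpos': "0 < real m" using m8 k1 by simp
    have Fb: "F \<le> real (k+1) / real m" by (rule F_le)
    have "x * (real k + 1) \<le> (2 * real m) * (2 * real k)"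
      using mx m8 k1 x0 by (intro mult_mono) auto
    hence key: "1/8 * (x / real k) * (real (k+1) / real m) \<le> 1/2"
      using k1 mpos' by (simp add: field_simps)
    have "1/8 * (x / real k) * W \<le> 1/8 * (x / real k) * (real (k+1) / real m)"
      using vZ(5) Fb x0 unfolding W_def by (intro mult_left_mono) auto
    also have "\<dots> \<le> 1/2" by (rule key)
    also have "1/2 \<le> 1 - real (k+1) / real m"
    proof -
      have "real (k+1) / real m \<le> 1/2" using m8 k1 mpos' by (simp add: field_simps)
      thus ?thesis by simp
    qed
    also have "\<dots> \<le> 1 - F" using Fb by simp
    also have "\<dots> \<le> welfare n v Z" by (rule vZ(4))
    finally have "\<exists>Z. bij_betw Z {..<n} {..<n} \<and> 1/8 * (x / real k) * W \<le> welfare n v Z"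
      using vZ(3) by blast
    thus ?thesis using rk vZ unfolding x_def W_def
      by (intro exI[of _ id] exI[of _ v]) auto
  qed
qed
end
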